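(* Let $N\geq 2$ and $n\geq 1$ be integers. For a map $u=(u_1,\dots,u_N)^\top\in C^\infty(U)^N$ on an open set $U\subseteq\mathbb{R}^n$, write $Du\otimes Du:D^2u$ for the $\mathbb{R}^N$-valued function whose $\alpha$-th component is \[ \sum_{i,j=1}^n\sum_{\beta=1}^N D_iu_\alpha\, D_ju_\beta\, D^2_{ij}u_\beta ,\qquad \alpha=1,\dots,N . \] Then: (a) There exist a vector $\xi\in\mathbb{R}^N$, a map $u^1\in C^\infty(\mathbb{R}^n)^N$ with $Du^1\otimes Du^1:D^2u^1=0$ on $\mathbb{R}^n$, and open sets $\Omega^+,\Omega^-\subseteq\mathbb{R}^n$ such that \[ \sup_{\Omega^+}\xi\cdot u^1\;>\;\max_{\partial\Omega^+}\xi\cdot u^1 \qquad\text{and}\qquad \inf_{\Omega^-}\xi\cdot u^1\;<\;\min_{\partial\Omega^-}\xi\cdot u^1 , \] i.e. the projection $\xi\cdot u^1$ satisfies neither the Maximum nor the Minimum Principle. (b) There exists a map $u^2\in C^\infty(\mathbb{R}^n\setminus\{0\})^N$ with $Du^2\otimes Du^2:D^2u^2=0$ on $\mathbb{R}^n\setminus\{0\}$, and a bounded open set $\Omega$ whose closure is contained in $\mathbb{R}^n\setminus\{0\}$, such that \[ u^2(\Omega)\not\subseteq \overline{\mathrm{co}}\big(u^2(\partial\Omega)\big), \] where $\overline{\mathrm{co}}(A)$ denotes the closed convex hull of $A\subseteq\mathbb{R}^N$.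
   Context: $D_i=\partial/\partial x_i$, $D^2_{ij}=\partial^2/\partial x_i\partial x_j$, and $\xi\cdot u=\sum_\alpha \xi_\alpha u_\alpha$ is the Euclidean inner product in $\mathbb{R}^N$. The system $Du\otimes Du:D^2u=0$ is the tangential part of the $\infty$-Laplace system. *)

theory Defs
  imports "HOL-Analysis.Analysis"
begin

definition partial :: "'n::finite \<Rightarrow> (real^'n \<Rightarrow> real^'m) \<Rightarrow> real^'n \<Rightarrow> real^'m" where
  "partial i f x = frechet_derivative f (at x) (axis i 1)"

fun dpart :: "'n::finite list \<Rightarrow> (real^'n \<Rightarrow> real^'m) \<Rightarrow> real^'n \<Rightarrow> real^'m" where
  "dpart [] f = f"
| "dpart (i # is) f = partial i (dpart is f)"

definition smooth_on :: "(real^'n::finite) set \<Rightarrow> (real^'n \<Rightarrow> real^'m) \<Rightarrow> bool" where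
  "smooth_on U f \<longleftrightarrow> (\<forall>is. \<forall>x\<in>U. dpart is f differentiable (at x))"

definition tang_inf_lap :: "(real^'n::finite \<Rightarrow> real^'m::finite) \<Rightarrow> real^'n \<Rightarrow> real^'m" where
  "tang_inf_lap u x = (\<chi> \<alpha>. \<Sum>i\<in>UNIV. \<Sum>j\<in>UNIV. \<Sum>\<beta>\<in>UNIV.
      (partial i u x $ \<alpha>) * (partial j u x $ \<beta>) * (partial i (partial j u) x $ \<beta>))"

end

theory Submission
  imports Defs
begin

definition gf :: "('n::finite \<Rightarrow> real^'m) \<Rightarrow> ('n \<Rightarrow> real^'m) \<Rightarrow> real^'n \<Rightarrow> real^'m" where
  "gf A B x = (\<Sum>k\<in>UNIV. cos (x$k) *\<^sub>R A k + sin (x$k) *\<^sub>R B k)"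

lemma nth_deriv: "((\<lambda>x. x $ k) has_derivative (\<lambda>h. h $ k)) F"
  by (rule bounded_linear_imp_has_derivative[OF bounded_linear_vec_nth])

lemma gf_deriv: "(gf A B has_derivative
   (\<lambda>h. \<Sum>k\<in>UNIV. (- sin (x$k) * h$k) *\<^sub>R A k + (cos (x$k) * h$k) *\<^sub>R B k)) (at x)"
  unfolding gf_def
  by (rule has_derivative_sum) (auto intro!: derivative_eq_intros nth_deriv simp: algebra_simps)

lemma gf_partial_val: "partial i (gf A B) x = - sin (x$i) *\<^sub>R A i + cos (x$i) *\<^sub>R B i"
proof -
  have "partial i (gf A B) x = (\<Sum>k\<in>UNIV. (- sin (x$k) * axis i 1 $k) *\<^sub>R A k + (cos (x$k) * axis i 1 $k) *\<^sub>R B k)"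
    unfolding partial_def by (subst frechet_derivative_at[OF gf_deriv, symmetric]) (rule refl)
  also have "\<dots> = (\<Sum>k\<in>UNIV. if k = i then - sin (x$i) *\<^sub>R A i + cos (x$i) *\<^sub>R B i else 0)"
    by (rule sum.cong[OF refl], simp add: axis_def)
  also have "\<dots> = - sin (x$i) *\<^sub>R A i + cos (x$i) *\<^sub>R B i"
    by simp
  finally show ?thesis .
qed

lemma gf_partial: "partial i (gf A B) = gf (\<lambda>k. if k = i then B i else 0) (\<lambda>k. if k = i then - A i else 0)"
proof
  fix x
  have "gf (\<lambda>k. if k = i then B i else 0) (\<lambda>k. if k = i then - A i else 0) x
     = (\<Sum>k\<in>UNIV. if k = i then - sin (x$i) *\<^sub>R A i + cos (x$i) *\<^sub>R B i else 0)"
    unfolding gf_def by (rule sum.cong[OF refl], simp)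
  also have "\<dots> = - sin (x$i) *\<^sub>R A i + cos (x$i) *\<^sub>R B i"
    by simp
  finally show "partial i (gf A B) x = gf (\<lambda>k. if k = i then B i else 0) (\<lambda>k. if k = i then - A i else 0) x"
    by (simp only: gf_partial_val)
qed

lemma gf_dpart: "\<exists>A' B'. dpart is (gf A B) = gf A' B'"
proof (induction "is")
  case Nil then show ?case by auto
next
  case (Cons a "is")
  then obtain A' B' where "dpart is (gf A B) = gf A' B'" by blast
  then show ?case by (intro exI) (simp add: gf_partial)
qed

lemma gf_smooth: "smooth_on U (gf A B)"
  unfolding smooth_on_def
proof (intro allI ballI)
  fix "is" x
  obtain A' B' where e: "dpart is (gf A B) = gf A' B'" using gf_dpart by blast
  show "dpart is (gf A B) differentiable (at x)"
    unfolding e differentiable_def using gf_deriv by blast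
qed


definition fsum :: "real^'n::finite \<Rightarrow> real" where
  "fsum x = (\<Sum>k\<in>UNIV. cos (x$k))"

lemma fsum_cont: "continuous_on S fsum"
  unfolding fsum_def by (intro continuous_intros)

lemma cos_shift:
  fixes c z s :: real
  assumes "cos c = s" "s = 1 \<or> s = -1"
  shows "cos z = s * cos (z - c)"
proof -
  have "(sin c)^2 = 0" using sin_cos_squared_add[of c] assms(1) assms(2) by auto
  then have "sin c = 0" by simp
  have "cos z = cos (c + (z - c))" by simp
  also have "\<dots> = cos c * cos (z - c) - sin c * sin (z - c)" by (rule cos_add)
  finally show ?thesis using assms \<open>sin c = 0\<close> by simp
qed

lemma cos_lt1: fixes d :: real assumes "d \<noteq> 0" "\<bar>d\<bar> \<le> 1" shows "cos d < 1"
proof -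
  have "cos \<bar>d\<bar> < cos 0" using assms pi_gt3 by (intro cos_monotone_0_pi) auto
  then show ?thesis by simp
qed

lemma sphere_coord:
  fixes c z :: "real^'n::finite"
  assumes "z \<in> sphere c 1"
  shows "\<exists>k. z$k - c$k \<noteq> 0 \<and> \<bar>z$k - c$k\<bar> \<le> 1"
proof -
  have "z \<noteq> c" using assms by auto
  then obtain k where "z$k \<noteq> c$k" by (auto simp: vec_eq_iff)
  moreover have "\<bar>(z - c)$k\<bar> \<le> norm (z - c)" by (rule component_le_norm_cart)
  moreover have "norm (z - c) = 1" using assms by (simp add: dist_norm norm_minus_commute)
  ultimately show ?thesis by auto
qed

lemma fsum_max:
  fixes c z :: "real^'n::finite"
  assumes "\<forall>k. cos (c$k) = 1" "z \<in> sphere c 1"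
  shows "fsum z < fsum c" and "fsum c = real CARD('n)"
proof -
  show fc: "fsum c = real CARD('n)" using assms by (simp add: fsum_def)
  obtain k where k: "z$k - c$k \<noteq> 0" "\<bar>z$k - c$k\<bar> \<le> 1" using sphere_coord[OF assms(2)] by blast
  have ck: "cos (z$k) = cos (z$k - c$k)" for k using assms(1) cos_shift[of "c$k" 1 "z$k"] by simp
  have "(\<Sum>k\<in>UNIV. cos (z$k)) < (\<Sum>k\<in>(UNIV::'n set). (1::real))"
  proof (rule sum_strict_mono_ex1[where f="\<lambda>k. cos (z$k)" and g="\<lambda>k. 1"])
    show "\<forall>x\<in>UNIV. cos (z $ x) \<le> 1" by simp
    have "cos (z$k) < 1" using cos_lt1[OF k] ck[of k] by linarith
    then show "\<exists>a\<in>UNIV. cos (z $ a) < 1" by blast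
  qed simp
  then show "fsum z < fsum c" using fc by (simp add: fsum_def)
qed

lemma fsum_min:
  fixes c z :: "real^'n::finite"
  assumes "\<forall>k. cos (c$k) = -1" "z \<in> sphere c 1"
  shows "fsum z > fsum c"
proof -
  have fc: "fsum c = - real CARD('n)" using assms by (simp add: fsum_def)
  obtain k where k: "z$k - c$k \<noteq> 0" "\<bar>z$k - c$k\<bar> \<le> 1" using sphere_coord[OF assms(2)] by blast
  have ck: "cos (z$k) = - cos (z$k - c$k)" for k using assms(1) cos_shift[of "c$k" "-1" "z$k"] by simp
  have "(\<Sum>k\<in>(UNIV::'n set). (-1::real)) < (\<Sum>k\<in>UNIV. cos (z$k))"
  proof (rule sum_strict_mono_ex1[where g="\<lambda>k. cos (z$k)" and f="\<lambda>k. -1"])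
    show "\<forall>x\<in>UNIV. -1 \<le> cos (z $ x)" by simp
    have "-1 < cos (z$k)" using cos_lt1[OF k] ck[of k] by linarith
    then show "\<exists>a\<in>UNIV. -1 < cos (z $ a)" by blast
  qed simp
  then show ?thesis using fc by (simp add: fsum_def)
qed


lemma u_comp:
  fixes a b :: "'N::finite"
  assumes "a \<noteq> b"
  shows "gf (\<lambda>k::'n::finite. axis a 1) (\<lambda>k. axis b 1) x $ a = fsum x"
  using assms by (simp add: gf_def fsum_def sum_component axis_def)

lemma u_tang:
  fixes a b :: "'N::finite"
  assumes "a \<noteq> b"
  shows "tang_inf_lap (gf (\<lambda>k::'n::finite. axis a 1) (\<lambda>k. axis b 1)) x = 0"
proof -
  let ?u = "gf (\<lambda>k::'n::finite. axis a 1) (\<lambda>k. axis b 1 :: real^'N)"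
  have e1: "partial j ?u x = - sin (x$j) *\<^sub>R axis a 1 + cos (x$j) *\<^sub>R axis b 1" for j
    by (rule gf_partial_val)
  have e2: "partial i (partial j ?u) x = - sin (x$i) *\<^sub>R (if i = j then axis b 1 else 0)
       + cos (x$i) *\<^sub>R (if i = j then - axis a 1 else 0)" for i j
    by (subst gf_partial[of j]) (simp add: gf_partial_val)
  have inner0: "partial j ?u x \<bullet> partial i (partial j ?u) x = 0" for i j
    unfolding e1 e2 using assms
    by (cases "i = j") (simp_all add: inner_add_left inner_add_right inner_axis_axis algebra_simps)
  have "(\<Sum>\<beta>\<in>UNIV. (partial i ?u x $ \<alpha>) * (partial j ?u x $ \<beta>) * (partial i (partial j ?u) x $ \<beta>))
        = (partial i ?u x $ \<alpha>) * (partial j ?u x \<bullet> partial i (partial j ?u) x)" for i j \<alpha>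
    by (simp add: inner_vec_def sum_distrib_left mult.assoc)
  then show ?thesis unfolding tang_inf_lap_def using inner0 by (simp add: vec_eq_iff)
qed

theorem mainTheorem1:
  assumes "CARD('N::finite) \<ge> 2"
  shows
   "(\<exists>(\<xi>::real^'N) (u1::real^'n::finite \<Rightarrow> real^'N) \<Omega>p \<Omega>m.
        smooth_on UNIV u1 \<and> (\<forall>x. tang_inf_lap u1 x = 0) \<and>
        open \<Omega>p \<and> bounded \<Omega>p \<and> open \<Omega>m \<and> bounded \<Omega>m \<and>
        (\<exists>y\<in>frontier \<Omega>p. (\<forall>z\<in>frontier \<Omega>p. \<xi> \<bullet> u1 z \<le> \<xi> \<bullet> u1 y) \<and>
                          (\<exists>x\<in>\<Omega>p. \<xi> \<bullet> u1 x > \<xi> \<bullet> u1 y)) \<and>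
        (\<exists>y\<in>frontier \<Omega>m. (\<forall>z\<in>frontier \<Omega>m. \<xi> \<bullet> u1 z \<ge> \<xi> \<bullet> u1 y) \<and>
                          (\<exists>x\<in>\<Omega>m. \<xi> \<bullet> u1 x < \<xi> \<bullet> u1 y)))
    \<and>
    (\<exists>(u2::real^'n \<Rightarrow> real^'N) \<Omega>.
        smooth_on (- {0}) u2 \<and> (\<forall>x. x \<noteq> 0 \<longrightarrow> tang_inf_lap u2 x = 0) \<and>
        open \<Omega> \<and> bounded \<Omega> \<and> closure \<Omega> \<subseteq> - {0} \<and>
        \<not> (u2 ` \<Omega> \<subseteq> closure (convex hull (u2 ` frontier \<Omega>))))"
proof -
  have "\<exists>a b::'N. a \<noteq> b"
  proof (rule ccontr)
    assume "\<not> ?thesis"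
    then have "(UNIV::'N set) = {undefined}" by auto
    then have "card (UNIV::'N set) = card {undefined::'N}" by (rule arg_cong)
    then have "CARD('N) = 1" by simp
    with assms show False by simp
  qed
  then obtain a b :: 'N where ab: "a \<noteq> b" by blast
  define u :: "real^'n \<Rightarrow> real^'N" where "u = gf (\<lambda>k. axis a 1) (\<lambda>k. axis b 1)"
  define \<xi> :: "real^'N" where "\<xi> = axis a 1"
  have hf: "\<xi> \<bullet> u z = fsum z" for z
    unfolding \<xi>_def u_def using u_comp[OF ab] by (simp add: inner_axis')
  have sm: "smooth_on U u" for U unfolding u_def by (rule gf_smooth)
  have tg: "tang_inf_lap u x = 0" for x unfolding u_def by (rule u_tang[OF ab])
  have fr: "frontier (ball c 1) = sphere c 1" for c :: "real^'n" by simp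
  have sne: "sphere c 1 \<noteq> {}" for c :: "real^'n" by simp
  have maxex: "\<exists>y\<in>sphere c 1. \<forall>z\<in>sphere c 1. fsum z \<le> fsum y" for c :: "real^'n"
    by (rule continuous_attains_sup[OF compact_sphere sne fsum_cont])
  have minex: "\<exists>y\<in>sphere c 1. \<forall>z\<in>sphere c 1. fsum y \<le> fsum z" for c :: "real^'n"
    by (rule continuous_attains_inf[OF compact_sphere sne fsum_cont])
  define c1 :: "real^'n" where "c1 = (\<chi> k. pi)"
  define c2 :: "real^'n" where "c2 = (\<chi> k. 2 * pi)"
  have P1: "\<exists>y\<in>frontier (ball 0 1). (\<forall>z\<in>frontier (ball 0 1). \<xi> \<bullet> u z \<le> \<xi> \<bullet> u y) \<and>
                          (\<exists>x\<in>ball 0 1. \<xi> \<bullet> u x > \<xi> \<bullet> u y)"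
  proof -
    obtain y where y: "y \<in> sphere (0::real^'n) 1" "\<forall>z\<in>sphere (0::real^'n) 1. fsum z \<le> fsum y" using maxex[of 0] by blast
    have "fsum y < fsum (0::real^'n)" by (rule fsum_max(1)[OF _ y(1)]) simp
    then show ?thesis unfolding fr hf using y by (intro bexI[of _ y] conjI bexI[of _ 0]) auto
  qed
  have P2: "\<exists>y\<in>frontier (ball c1 1). (\<forall>z\<in>frontier (ball c1 1). \<xi> \<bullet> u z \<ge> \<xi> \<bullet> u y) \<and>
                          (\<exists>x\<in>ball c1 1. \<xi> \<bullet> u x < \<xi> \<bullet> u y)"
  proof -
    obtain y where y: "y \<in> sphere c1 1" "\<forall>z\<in>sphere c1 1. fsum y \<le> fsum z" using minex[of c1] by blast
    have "fsum y > fsum c1" by (rule fsum_min[OF _ y(1)]) (simp add: c1_def)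
    then show ?thesis unfolding fr hf using y by (intro bexI[of _ y] conjI bexI[of _ c1]) auto
  qed
  have P3: "\<not> (u ` ball c2 1 \<subseteq> closure (convex hull (u ` frontier (ball c2 1))))"
  proof
    assume sub: "u ` ball c2 1 \<subseteq> closure (convex hull (u ` frontier (ball c2 1)))"
    obtain y where y: "y \<in> sphere c2 1" "\<forall>z\<in>sphere c2 1. fsum z \<le> fsum y" using maxex[of c2] by blast
    have cc: "\<forall>k. cos (c2$k) = 1" by (simp add: c2_def)
    have lt: "fsum y < fsum c2" by (rule fsum_max(1)[OF cc y(1)])
    have "u ` frontier (ball c2 1) \<subseteq> {v. \<xi> \<bullet> v \<le> fsum y}"
      unfolding fr using y(2) hf by auto
    then have "convex hull (u ` frontier (ball c2 1)) \<subseteq> {v. \<xi> \<bullet> v \<le> fsum y}"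
      by (intro hull_minimal convex_halfspace_le)
    then have "closure (convex hull (u ` frontier (ball c2 1))) \<subseteq> {v. \<xi> \<bullet> v \<le> fsum y}"
      by (intro closure_minimal closed_halfspace_le)
    moreover have "u c2 \<in> u ` ball c2 1" by simp
    ultimately have "\<xi> \<bullet> u c2 \<le> fsum y" using sub by blast
    then show False using lt hf by simp
  qed
  have nz: "closure (ball c2 1) \<subseteq> - {0}"
  proof
    fix x assume "x \<in> closure (ball c2 1)"
    then have "norm (x - c2) \<le> 1" by (simp add: dist_norm norm_minus_commute)
    moreover have "\<bar>c2 $ undefined\<bar> \<le> norm c2" by (rule component_le_norm_cart)
    moreover have "\<bar>c2 $ undefined\<bar> = 2 * pi" by (simp add: c2_def)
    ultimately have "x \<noteq> 0" using pi_gt3 by auto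
    then show "x \<in> - {0}" by simp
  qed
  show ?thesis
    apply (rule conjI)
    subgoal
      apply (rule exI[of _ \<xi>], rule exI[of _ u], rule exI[of _ "ball 0 1"], rule exI[of _ "ball c1 1"])
      using sm tg P1 P2 by auto
    subgoal
      apply (rule exI[of _ u], rule exI[of _ "ball c2 1"])
      using sm tg P3 nz by auto
    done
qed

end
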